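(* Let $\mathfrak{S}=(\mathcal{X},\mathsf{S},\gamma,(\Lambda_{a})_{a\in\mathcal{A}})$ be a spectral decomposition system for the Euclidean space $\mathfrak{H}$ with spectral-induced ordering mapping $\tau$. Then: (i) $\tau\circ\gamma=\gamma$ and, for every $a\in\mathcal{A}$, $\gamma\circ\Lambda_a\circ\gamma=\gamma$; (ii) the range of $\gamma$ equals the range of $\tau$ and is a closed convex cone in $\mathcal{X}$; (iii) for all $X\in\mathfrak{H}$ and $a\in\mathcal{A}$, $\|X\|=\|\Lambda_a\gamma(X)\|=\|\gamma(X)\|$; (iv) $\|\gamma(X)-\gamma(Y)\|\leq\|X-Y\|$ for all $X,Y\in\mathfrak{H}$; (v) $\gamma(\alpha X)=\alpha\gamma(X)$ for all $X\in\mathfrak{H}$ and $\alpha\in[0,+\infty)$; (vi) $\gamma(-X)\in-\mathsf{S}\cdot\gamma(X)$ for all $X\in\mathfrak{H}$.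
   Context: A Euclidean space is a finite-dimensional real inner product space; inner products are written $\langle\cdot,\cdot\rangle$ and norms $\|\cdot\|$. Let $\mathfrak{H}$ and $\mathcal{X}$ be Euclidean spaces, let $\mathsf{S}$ be a group acting on $\mathcal{X}$ by linear isometries, let $\gamma\colon\mathfrak{H}\to\mathcal{X}$, and let $(\Lambda_a)_{a\in\mathcal{A}}$ be a family of linear operators from $\mathcal{X}$ to $\mathfrak{H}$. The orbit of $x$ is $\mathsf{S}\cdot x=\{s\cdot x: s\in\mathsf{S}\}$, and $-\mathsf{S}\cdot x=\{-s\cdot x: s\in\mathsf{S}\}$; a map $f$ on $\mathcal{X}$ is $\mathsf{S}$-invariant if $f(s\cdot x)=f(x)$ for all $s,x$. The tuple is a spectral decomposition system for $\mathfrak{H}$ if: [A] every $\Lambda_a$ is an isometry; [B] there exists an $\mathsf{S}$-invariant $\tau\colon\mathcal{X}\to\mathcal{X}$ with $\tau(x)\in\mathsf{S}\cdot x$ for all $x$ and $\gamma\circ\Lambda_a=\tau$ for all $a$; [C] for every $X\in\mathfrak{H}$ there is $a$ with $X=\Lambda_a\gamma(X)$; [D] $\langle X,Y\rangle\leq\langle\gamma(X),\gamma(Y)\rangle$ for all $X,Y\in\mathfrak{H}$. The map $\tau$ in [B] is the spectral-induced ordering mapping. *)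

theory Defs
  imports "HOL-Analysis.Analysis" "HOL-Algebra.Group_Action"
begin

definition linear_isometric_action :: "('s, 'm) monoid_scheme \<Rightarrow> ('s \<Rightarrow> 'x::euclidean_space \<Rightarrow> 'x) \<Rightarrow> bool" where
  "linear_isometric_action G act \<longleftrightarrow>
     group_action G (UNIV :: 'x set) act \<and>
     (\<forall>s\<in>carrier G. linear (act s) \<and> (\<forall>x. norm (act s x) = norm x))"

definition spectral_ordering_map ::
  "('s, 'm) monoid_scheme \<Rightarrow> ('s \<Rightarrow> 'x::euclidean_space \<Rightarrow> 'x) \<Rightarrow> ('h::euclidean_space \<Rightarrow> 'x)
   \<Rightarrow> 'a set \<Rightarrow> ('a \<Rightarrow> 'x \<Rightarrow> 'h) \<Rightarrow> ('x \<Rightarrow> 'x) \<Rightarrow> bool" where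
  "spectral_ordering_map G act \<gamma> A \<Lambda> \<tau> \<longleftrightarrow>
     (\<forall>s\<in>carrier G. \<forall>x. \<tau> (act s x) = \<tau> x) \<and>
     (\<forall>x. \<tau> x \<in> orbit G act x) \<and>
     (\<forall>a\<in>A. \<gamma> \<circ> \<Lambda> a = \<tau>)"

definition spectral_decomposition_system ::
  "('s, 'm) monoid_scheme \<Rightarrow> ('s \<Rightarrow> 'x::euclidean_space \<Rightarrow> 'x) \<Rightarrow> ('h::euclidean_space \<Rightarrow> 'x)
   \<Rightarrow> 'a set \<Rightarrow> ('a \<Rightarrow> 'x \<Rightarrow> 'h) \<Rightarrow> bool" where
  "spectral_decomposition_system G act \<gamma> A \<Lambda> \<longleftrightarrow>
     linear_isometric_action G act \<and>
     (\<forall>a\<in>A. linear (\<Lambda> a) \<and> (\<forall>x. norm (\<Lambda> a x) = norm x)) \<and>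
     (\<exists>\<tau>. spectral_ordering_map G act \<gamma> A \<Lambda> \<tau>) \<and>
     (\<forall>X. \<exists>a\<in>A. X = \<Lambda> a (\<gamma> X)) \<and>
     (\<forall>X Y. inner X Y \<le> inner (\<gamma> X) (\<gamma> Y))"

end

theory Submission
  imports Defs
begin

lemma iso_inner:
  assumes "linear f" "\<forall>x. norm (f x) = norm x"
  shows "inner (f x) (f y) = inner x y"
proof -
  have "f (x + y) = f x + f y" using assms(1) by (simp add: linear_add)
  then have "norm (f x + f y) = norm (x + y)" using assms(2) by metis
  then show ?thesis using assms(2) by (simp add: dot_norm)
qed

lemma aux_real: fixes a b c p q :: real
  assumes "a \<le> b" "a = (c - p) / 2" "b = (c - q) / 2" shows "q \<le> p"
  using assms by simp

lemma fix_lemma: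
  fixes u v :: "'x::real_inner"
  assumes "norm v = norm u" "inner u u \<le> inner u v"
  shows "v = u"
proof -
  have "(norm (u - v))\<^sup>2 = inner u u - 2 * inner u v + inner v v"
    by (simp add: power2_norm_eq_inner inner_diff_left inner_diff_right inner_commute)
  also have "inner v v = inner u u" using assms(1) by (metis power2_norm_eq_inner)
  finally have "(norm (u - v))\<^sup>2 \<le> 0" using assms(2) by linarith
  then show ?thesis by simp
qed

theorem proposition3p5:
  fixes G :: "('s, 'm) monoid_scheme"
    and act :: "'s \<Rightarrow> 'x::euclidean_space \<Rightarrow> 'x"
    and \<gamma> :: "'h::euclidean_space \<Rightarrow> 'x"
    and A :: "'a set"
    and \<Lambda> :: "'a \<Rightarrow> 'x \<Rightarrow> 'h"
    and \<tau> :: "'x \<Rightarrow> 'x"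
  assumes sds: "spectral_decomposition_system G act \<gamma> A \<Lambda>"
    and tau: "spectral_ordering_map G act \<gamma> A \<Lambda> \<tau>"
  shows "(\<tau> \<circ> \<gamma> = \<gamma> \<and> (\<forall>a\<in>A. \<gamma> \<circ> \<Lambda> a \<circ> \<gamma> = \<gamma>))
    \<and> (range \<gamma> = range \<tau> \<and> closed (range \<gamma>) \<and> convex_cone (range \<gamma>))
    \<and> (\<forall>X. \<forall>a\<in>A. norm X = norm (\<Lambda> a (\<gamma> X)) \<and> norm (\<Lambda> a (\<gamma> X)) = norm (\<gamma> X))
    \<and> (\<forall>X Y. norm (\<gamma> X - \<gamma> Y) \<le> norm (X - Y))
    \<and> (\<forall>X. \<forall>\<alpha>::real. \<alpha> \<ge> 0 \<longrightarrow> \<gamma> (\<alpha> *\<^sub>R X) = \<alpha> *\<^sub>R \<gamma> X)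
    \<and> (\<forall>X. \<gamma> (- X) \<in> {- act s (\<gamma> X) | s. s \<in> carrier G})"
proof -
  have actlin: "\<And>s. s \<in> carrier G \<Longrightarrow> linear (act s)"
    and actn: "\<And>s x. s \<in> carrier G \<Longrightarrow> norm (act s x) = norm x"
    using sds unfolding spectral_decomposition_system_def linear_isometric_action_def by auto
  have Llin: "\<And>a. a \<in> A \<Longrightarrow> linear (\<Lambda> a)"
    and Ln: "\<And>a. a \<in> A \<Longrightarrow> \<forall>x. norm (\<Lambda> a x) = norm x"
    using sds unfolding spectral_decomposition_system_def by auto
  have C: "\<And>X. \<exists>a\<in>A. X = \<Lambda> a (\<gamma> X)"
    and D: "\<And>X Y. inner X Y \<le> inner (\<gamma> X) (\<gamma> Y)"
    using sds unfolding spectral_decomposition_system_def by auto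
  have tinv: "\<And>s x. s \<in> carrier G \<Longrightarrow> \<tau> (act s x) = \<tau> x"
    and torb: "\<And>x. \<tau> x \<in> orbit G act x"
    and gL: "\<And>a x. a \<in> A \<Longrightarrow> \<gamma> (\<Lambda> a x) = \<tau> x"
    using tau unfolding spectral_ordering_map_def by (auto simp: fun_eq_iff)
  have tn: "norm (\<tau> x) = norm x" for x
    using torb[of x] actn unfolding orbit_def by auto
  have Li: "\<And>a x y. a \<in> A \<Longrightarrow> inner (\<Lambda> a x) (\<Lambda> a y) = inner x y"
    using iso_inner Llin Ln by blast
  obtain a0 where a0: "a0 \<in> A" using C by blast
  have tg: "\<tau> (\<gamma> X) = \<gamma> X" for X
  proof -
    obtain a where "a \<in> A" "X = \<Lambda> a (\<gamma> X)" using C by blast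
    then show ?thesis using gL by metis
  qed
  have i1: "\<tau> \<circ> \<gamma> = \<gamma> \<and> (\<forall>a\<in>A. \<gamma> \<circ> \<Lambda> a \<circ> \<gamma> = \<gamma>)"
    using tg gL by (auto simp: fun_eq_iff)
  have key: "inner (\<gamma> X) y \<le> inner (\<gamma> X) (\<tau> y)" for X y
  proof -
    obtain a where a: "a \<in> A" "X = \<Lambda> a (\<gamma> X)" using C by blast
    have "inner (\<gamma> X) y = inner X (\<Lambda> a y)" using Li[OF a(1)] a(2) by metis
    also have "\<dots> \<le> inner (\<gamma> X) (\<gamma> (\<Lambda> a y))" by (rule D)
    finally show ?thesis using gL[OF a(1)] by simp
  qed
  have fixt: "inner u u \<le> inner u (\<tau> u) \<Longrightarrow> \<tau> u = u" for u
    using fix_lemma tn by blast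
  have rng: "range \<gamma> = range \<tau>"
  proof
    show "range \<gamma> \<subseteq> range \<tau>" using tg by (metis image_subsetI rangeI)
    show "range \<tau> \<subseteq> range \<gamma>" using gL[OF a0] by (metis image_subsetI rangeI)
  qed
  have i3: "\<forall>X. \<forall>a\<in>A. norm X = norm (\<Lambda> a (\<gamma> X)) \<and> norm (\<Lambda> a (\<gamma> X)) = norm (\<gamma> X)"
  proof (intro allI ballI)
    fix X a assume a: "a \<in> A"
    obtain b where b: "b \<in> A" "X = \<Lambda> b (\<gamma> X)" using C by blast
    have "norm X = norm (\<Lambda> b (\<gamma> X))" using b(2) by (rule arg_cong)
    also have "\<dots> = norm (\<gamma> X)" using Ln[OF b(1)] by blast
    finally have "norm X = norm (\<gamma> X)" .
    then show "norm X = norm (\<Lambda> a (\<gamma> X)) \<and> norm (\<Lambda> a (\<gamma> X)) = norm (\<gamma> X)"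
      using Ln[OF a] by simp
  qed
  have ng: "norm (\<gamma> X) = norm X" for X
  proof -
    from i3 a0 have "norm X = norm (\<Lambda> a0 (\<gamma> X)) \<and> norm (\<Lambda> a0 (\<gamma> X)) = norm (\<gamma> X)" by blast
    then show ?thesis by linarith
  qed
  have i4: "norm (\<gamma> X - \<gamma> Y) \<le> norm (X - Y)" for X Y
  proof -
    have e1: "inner X Y = (((norm X)\<^sup>2 + (norm Y)\<^sup>2) - (norm (X - Y))\<^sup>2) / 2"
      by (rule dot_norm_neg)
    have e2: "inner (\<gamma> X) (\<gamma> Y) = (((norm (\<gamma> X))\<^sup>2 + (norm (\<gamma> Y))\<^sup>2) - (norm (\<gamma> X - \<gamma> Y))\<^sup>2) / 2"
      by (rule dot_norm_neg)
    have "(norm (\<gamma> X - \<gamma> Y))\<^sup>2 \<le> (norm (X - Y))\<^sup>2"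
      using aux_real[OF D[of X Y] e1 e2[unfolded ng]] .
    then show ?thesis by (rule power2_le_imp_le) simp
  qed
  have i5: "\<gamma> (\<alpha> *\<^sub>R X) = \<alpha> *\<^sub>R \<gamma> X" if "\<alpha> \<ge> 0" for X \<alpha>
  proof -
    obtain a where a: "a \<in> A" "X = \<Lambda> a (\<gamma> X)" using C by blast
    have "\<alpha> *\<^sub>R X = \<alpha> *\<^sub>R \<Lambda> a (\<gamma> X)" using a(2) by (rule arg_cong)
    also have "\<dots> = \<Lambda> a (\<alpha> *\<^sub>R \<gamma> X)" using Llin[OF a(1)] by (simp add: linear_scale)
    finally have "\<alpha> *\<^sub>R X = \<Lambda> a (\<alpha> *\<^sub>R \<gamma> X)" .
    then have e: "\<gamma> (\<alpha> *\<^sub>R X) = \<tau> (\<alpha> *\<^sub>R \<gamma> X)" using gL[OF a(1)] by simp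
    let ?u = "\<alpha> *\<^sub>R \<gamma> X"
    have "inner ?u ?u = \<alpha> * inner (\<gamma> X) ?u" by simp
    also have "\<dots> \<le> \<alpha> * inner (\<gamma> X) (\<tau> ?u)" using key[of X ?u] that by (rule mult_left_mono)
    also have "\<dots> = inner ?u (\<tau> ?u)" by simp
    finally have "\<tau> ?u = ?u" by (rule fixt)
    with e show ?thesis by simp
  qed
  have addc: "\<gamma> X + \<gamma> Y \<in> range \<gamma>" for X Y
  proof -
    let ?u = "\<gamma> X + \<gamma> Y"
    have "inner ?u ?u = inner (\<gamma> X) ?u + inner (\<gamma> Y) ?u" by (simp add: inner_add_left)
    also have "\<dots> \<le> inner (\<gamma> X) (\<tau> ?u) + inner (\<gamma> Y) (\<tau> ?u)" by (rule add_mono[OF key key])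
    also have "\<dots> = inner ?u (\<tau> ?u)" by (simp add: inner_add_left)
    finally have "\<tau> ?u = ?u" by (rule fixt)
    then have "?u \<in> range \<tau>" by (metis rangeI)
    with rng show ?thesis by simp
  qed
  have g0: "\<gamma> 0 = 0"
  proof -
    have "\<gamma> (0 *\<^sub>R 0) = 0 *\<^sub>R \<gamma> 0" by (rule i5) simp
    then show ?thesis by simp
  qed
  have cc: "convex_cone (range \<gamma>)"
    unfolding convex_cone_iff
  proof (intro conjI ballI allI impI)
    have "0 = \<gamma> 0" using g0 by simp
    then show "0 \<in> range \<gamma>" by (metis rangeI)
    show "x + y \<in> range \<gamma>" if "x \<in> range \<gamma>" "y \<in> range \<gamma>" for x y using that addc by blast
    show "c *\<^sub>R x \<in> range \<gamma>" if xr: "x \<in> range \<gamma>" and c0: "c \<ge> 0" for x c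
    proof -
      obtain X where X: "x = \<gamma> X" using xr by blast
      have "c *\<^sub>R x = \<gamma> (c *\<^sub>R X)" using i5[OF c0] X by simp
      then show ?thesis by (metis rangeI)
    qed
  qed
  have cl: "closed (range \<gamma>)"
  proof -
    define f where "f = (\<lambda>x. \<gamma> (\<Lambda> a0 x) - x)"
    have eq: "range \<gamma> = {x \<in> UNIV. f x = 0}"
    proof
      show "range \<gamma> \<subseteq> {x \<in> UNIV. f x = 0}" using gL[OF a0] tg unfolding f_def by auto
      show "{x \<in> UNIV. f x = 0} \<subseteq> range \<gamma>"
      proof
        fix x assume "x \<in> {x \<in> UNIV. f x = 0}"
        then have "x = \<gamma> (\<Lambda> a0 x)" unfolding f_def by simp
        then show "x \<in> range \<gamma>" by (metis rangeI)
      qed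
    qed
    have lip: "continuous_on UNIV \<gamma>"
      unfolding continuous_on_iff
    proof (intro ballI allI impI)
      fix x :: 'h and e :: real assume "e > 0"
      show "\<exists>d>0. \<forall>x'\<in>UNIV. dist x' x < d \<longrightarrow> dist (\<gamma> x') (\<gamma> x) < e"
      proof (intro exI conjI ballI impI)
        show "e > 0" by fact
        fix x' assume "dist x' x < e"
        moreover have "dist (\<gamma> x') (\<gamma> x) \<le> dist x' x" unfolding dist_norm by (rule i4)
        ultimately show "dist (\<gamma> x') (\<gamma> x) < e" by linarith
      qed
    qed
    have "continuous_on UNIV (\<Lambda> a0)"
      using Llin[OF a0] by (simp add: linear_continuous_on linear_conv_bounded_linear)
    then have "continuous_on UNIV (\<lambda>x. \<gamma> (\<Lambda> a0 x))"
      by (rule continuous_on_compose2[OF lip]) simp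
    then have "continuous_on UNIV f" unfolding f_def
      by (rule continuous_on_diff[OF _ continuous_on_id])
    then have "closed {x \<in> UNIV. f x = 0}"
      by (rule continuous_closed_preimage_constant) simp
    then show ?thesis using eq by simp
  qed
  have i6: "\<gamma> (- X) \<in> {- act s (\<gamma> X) | s. s \<in> carrier G}" for X
  proof -
    obtain a where a: "a \<in> A" "X = \<Lambda> a (\<gamma> X)" using C by blast
    have "- X = - \<Lambda> a (\<gamma> X)" using a(2) by (rule arg_cong)
    also have "\<dots> = \<Lambda> a (- \<gamma> X)" using Llin[OF a(1)] by (simp add: linear_neg)
    finally have "- X = \<Lambda> a (- \<gamma> X)" .
    then have "\<gamma> (- X) = \<tau> (- \<gamma> X)" using gL[OF a(1)] by simp
    moreover obtain s where s: "s \<in> carrier G" "\<tau> (- \<gamma> X) = act s (- \<gamma> X)"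
      using torb[of "- \<gamma> X"] unfolding orbit_def by blast
    moreover have "act s (- \<gamma> X) = - act s (\<gamma> X)" using actlin[OF s(1)] by (simp add: linear_neg)
    ultimately have "\<gamma> (- X) = - act s (\<gamma> X)" by simp
    with s(1) show ?thesis by blast
  qed
  show ?thesis using i1 rng cl cc i3 i4 i5 i6 by blast
qed

end
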